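(* Let $b\in\mathbb Z_T$ be nonzero and let $B_1=\cdots=B_s=\{0,b\}$ be $s$ identical size-$2$ subsets of $\mathbb Z_T$ with $s\ge T^2$. Then the multiset $B_1+B_2+\cdots+B_s$ has bias at most $4|H|/s^{1/2}$ with respect to the subgroup $H=\langle b\rangle$.
   Context: $\mathbb Z_T$ is the additive cyclic group of order $T$. For multisets $A,B$, $A+B=\{a+b:a\in A,b\in B\}$ as a multiset; $\mu_A(x)$ is the multiplicity of $x$ in $A$. A multiset $A$ has bias at most $\epsilon$ with respect to a subgroup $H$ if $\mu_A(a)\le(1+\epsilon)\mu_A(a+h)$ for all $a\in A$ and all $h\in H$. $\langle b\rangle$ is the subgroup generated by $b$. *)

theory Defs
  imports Complex_Main "HOL-Library.Multiset"
begin

text \<open>Z_T is modelled by residues {0..<T} (nat), addition is (x+y) mod T.\<close>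

definition zmod_sumset :: "nat \<Rightarrow> nat multiset \<Rightarrow> nat multiset \<Rightarrow> nat multiset" where
  "zmod_sumset T A B = (\<Sum>a\<in>#A. image_mset (\<lambda>c. (a + c) mod T) B)"

fun iter_sumset :: "nat \<Rightarrow> nat multiset \<Rightarrow> nat \<Rightarrow> nat multiset" where
  "iter_sumset T B 0 = {#0#}"
| "iter_sumset T B (Suc s) = zmod_sumset T (iter_sumset T B s) B"

definition gen_subgroup :: "nat \<Rightarrow> nat \<Rightarrow> nat set" where
  "gen_subgroup T b = {(k * b) mod T | k. True}"

definition bias_at_most :: "nat \<Rightarrow> nat multiset \<Rightarrow> nat set \<Rightarrow> real \<Rightarrow> bool" where
  "bias_at_most T A H \<epsilon> \<longleftrightarrow>
     (\<forall>a \<in># A. \<forall>h \<in> H. real (count A a) \<le> (1 + \<epsilon>) * real (count A ((a + h) mod T)))"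

end

theory Submission imports Defs "HOL-Number_Theory.Cong" begin

lemma gmod:
  fixes T b k k' :: nat
  assumes "0 < T"
  shows "((k*b) mod T = (k'*b) mod T) \<longleftrightarrow> (k mod (T div gcd b T) = k' mod (T div gcd b T))"
proof -
  define g where "g = gcd b T"
  define m where "m = T div g"
  define b' where "b' = b div g"
  have gpos: "0 < g" using assms g_def by simp
  have T: "T = m * g" using m_def g_def by simp
  have b: "b = b' * g" using b'_def g_def by simp
  have cop: "coprime b' m" using div_gcd_coprime[of b T] assms unfolding b'_def m_def g_def by simp
  have "(k*b) mod T = ((k*b') mod m) * g" unfolding T b by (metis mod_mult_mult2 mult.assoc)
  moreover have "(k'*b) mod T = ((k'*b') mod m) * g" unfolding T b by (metis mod_mult_mult2 mult.assoc)
  ultimately have "((k*b) mod T = (k'*b) mod T) \<longleftrightarrow> [k*b' = k'*b'] (mod m)"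
    using gpos by (simp add: cong_def)
  also have "\<dots> \<longleftrightarrow> [k = k'] (mod m)" using cong_mult_rcancel_nat[OF cop] by simp
  finally show ?thesis unfolding cong_def m_def g_def .
qed

fun Kms :: "nat \<Rightarrow> nat multiset" where
  "Kms 0 = {#0#}"
| "Kms (Suc s) = Kms s + image_mset Suc (Kms s)"

lemma count_Kms: "count (Kms s) k = s choose k"
proof (induction s arbitrary: k)
  case 0
  then show ?case by (cases k) auto
next
  case (Suc s)
  show ?case
  proof (cases k)
    case 0
    have "count (image_mset Suc (Kms s)) 0 = 0" by (simp add: count_image_mset vimage_def)
    then show ?thesis using Suc 0 by simp
  next
    case (Suc k')
    have "count (image_mset Suc (Kms s)) (Suc k') = count (Kms s) k'"
    proof -
      have v: "Suc -` {Suc k'} = {k'}" by auto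
      show ?thesis by (cases "k' \<in># Kms s") (simp_all add: count_image_mset v not_in_iff)
    qed
    then show ?thesis using Suc.IH Suc by simp
  qed
qed

lemma set_Kms: "set_mset (Kms s) = {..s}"
proof -
  have "k \<in># Kms s \<longleftrightarrow> k \<le> s" for k
    using count_Kms[of s k] by (metis count_greater_zero_iff zero_less_binomial_iff)
  then show ?thesis by auto
qed

lemma zmod_sumset_pair:
  "zmod_sumset T A {#0, b#} = image_mset (\<lambda>a. a mod T) A + image_mset (\<lambda>a. (a+b) mod T) A"
  unfolding zmod_sumset_def by (induction A) auto

lemma iter_eq: "iter_sumset T {#0, b#} s = image_mset (\<lambda>k. (k*b) mod T) (Kms s)"
proof (induction s)
  case 0
  then show ?case by simp
next
  case (Suc s)
  have e: "((k * b) mod T + b) mod T = (Suc k * b) mod T" for k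
    by (metis mod_add_left_eq mult_Suc add.commute)
  show ?case using Suc by (simp add: zmod_sumset_pair multiset.map_comp o_def e)
qed

lemma count_iter:
  "count (iter_sumset T {#0, b#} s) x = (\<Sum>k\<in>{k. k \<le> s \<and> (k*b) mod T = x}. s choose k)"
proof -
  have "count (iter_sumset T {#0, b#} s) x = (\<Sum>k\<in>(\<lambda>k. (k*b) mod T) -` {x} \<inter> {..s}. s choose k)"
    unfolding iter_eq count_image_mset set_Kms count_Kms ..
  also have "(\<lambda>k. (k*b) mod T) -` {x} \<inter> {..s} = {k. k \<le> s \<and> (k*b) mod T = x}" by auto
  finally show ?thesis .
qed

lemma same_res_close:
  fixes x y m :: nat
  assumes "x mod m = y mod m" "x < y + m" "y < x + m"
  shows "x = y"
proof (rule ccontr)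
  assume ne: "x \<noteq> y"
  { fix u v :: nat assume "u < v" "u mod m = v mod m" "v < u + m"
    then have "m dvd v - u" using mod_eq_dvd_iff_nat[of u v m] by simp
    moreover have "0 < v - u" "v - u < m" using \<open>u < v\<close> \<open>v < u + m\<close> by auto
    ultimately have False using dvd_imp_le by fastforce }
  then show False using assms ne by (metis linorder_neqE_nat)
qed

lemma unimodal_class:
  fixes c :: "nat \<Rightarrow> nat"
  assumes m: "0 < m" and j: "j < m" and j': "j' < m" and ps: "p \<le> s"
    and up: "\<And>i k. i \<le> k \<Longrightarrow> k \<le> p \<Longrightarrow> c i \<le> c k"
    and down: "\<And>i k. p \<le> i \<Longrightarrow> i \<le> k \<Longrightarrow> c k \<le> c i"
    and bound: "\<And>k. c k \<le> M"
  shows "(\<Sum>k\<in>{k. k \<le> s \<and> k mod m = j}. c k) \<le> (\<Sum>k\<in>{k. k \<le> s \<and> k mod m = j'}. c k) + M"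
proof (cases "j = j'")
  case True then show ?thesis by simp
next
  case False
  define d where "d = (j' + m - j) mod m"
  define e where "e = m - d"
  have d0: "0 < d" and dm: "d < m"
  proof -
    show "d < m" using m d_def by simp
    show "0 < d"
    proof (rule ccontr)
      assume "\<not> 0 < d"
      then have "(j' + m - j) mod m = 0" using d_def by simp
      then have "m dvd (j' + m - j)" by auto
      moreover have "0 < j' + m - j" "j' + m - j < 2 * m" using j j' by auto
      ultimately have "j' + m - j = m" by (metis dvd_imp_le dvd_mult_div_cancel less_mult_imp_div_less nat_dvd_not_less not_less_eq one_add_one mult_1_right less_2_cases_iff Suc_1 mult_0_right bot_nat_0.not_eq_extremum)
      then show False using False j by arith
    qed
  qed
  define A where "A = {k. k \<le> s \<and> k mod m = j}"
  define B where "B = {k. k \<le> s \<and> k mod m = j'}"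
  define A1 where "A1 = {k\<in>A. k + d \<le> p}"
  define A2 where "A2 = {k\<in>A. p + 1 + e \<le> k}"
  define A3 where "A3 = {k\<in>A. p < k + d \<and> k < p + 1 + e}"
  have fA: "finite A" "finite B" unfolding A_def B_def by auto
  have fA': "finite A1" "finite A2" "finite A3" unfolding A1_def A2_def A3_def using fA by auto
  have resd: "(k + d) mod m = j'" if "k mod m = j" for k
  proof -
    have "(k + d) mod m = (k mod m + d) mod m" by (simp add: mod_add_left_eq)
    also have "\<dots> = (j + (j' + m - j)) mod m" using that d_def by (simp add: mod_add_right_eq)
    also have "j + (j' + m - j) = j' + m" using j by simp
    finally show ?thesis using j' by simp
  qed
  have rese: "(k - e) mod m = j'" if "k mod m = j" "e \<le> k" for k
  proof -
    have "(k - e) mod m = (k - e + m) mod m" by simp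
    also have "k - e + m = k + d" using that e_def dm by simp
    finally show ?thesis using resd that by simp
  qed
  have Asplit: "A = A1 \<union> A2 \<union> A3" unfolding A1_def A2_def A3_def by auto
  have disj1: "A1 \<inter> A2 = {}" unfolding A1_def A2_def by auto
  have disj2: "(A1 \<union> A2) \<inter> A3 = {}" unfolding A1_def A2_def A3_def by auto
  have sumA: "sum c A = sum c A1 + sum c A2 + sum c A3"
    unfolding Asplit using fA' disj1 disj2 by (simp add: sum.union_disjoint)
  have s1: "sum c A1 \<le> sum c ((\<lambda>k. k + d) ` A1)"
  proof -
    have "sum c A1 \<le> sum (\<lambda>k. c (k + d)) A1"
      by (rule sum_mono) (use up A1_def in auto)
    also have "\<dots> = sum c ((\<lambda>k. k + d) ` A1)" by (simp add: sum.reindex inj_on_def)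
    finally show ?thesis .
  qed
  have s2: "sum c A2 \<le> sum c ((\<lambda>k. k - e) ` A2)"
  proof -
    have "sum c A2 \<le> sum (\<lambda>k. c (k - e)) A2"
      by (rule sum_mono) (use down A2_def in auto)
    also have "\<dots> = sum c ((\<lambda>k. k - e) ` A2)"
      by (subst sum.reindex) (auto simp: inj_on_def A2_def)
    finally show ?thesis .
  qed
  have im1: "(\<lambda>k. k + d) ` A1 \<subseteq> B" using resd ps unfolding A1_def A_def B_def by auto
  have im2: "(\<lambda>k. k - e) ` A2 \<subseteq> B" using rese unfolding A2_def A_def B_def by auto
  have disj3: "(\<lambda>k. k + d) ` A1 \<inter> (\<lambda>k. k - e) ` A2 = {}" unfolding A1_def A2_def by auto
  have s12: "sum c A1 + sum c A2 \<le> sum c B"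
  proof -
    have "sum c A1 + sum c A2 \<le> sum c ((\<lambda>k. k + d) ` A1) + sum c ((\<lambda>k. k - e) ` A2)"
      using s1 s2 by simp
    also have "\<dots> = sum c ((\<lambda>k. k + d) ` A1 \<union> (\<lambda>k. k - e) ` A2)"
      using fA' disj3 by (simp add: sum.union_disjoint)
    also have "\<dots> \<le> sum c B" by (rule sum_mono2) (use fA im1 im2 in auto)
    finally show ?thesis .
  qed
  have s3: "sum c A3 \<le> M"
  proof (cases "A3 = {}")
    case True then show ?thesis by simp
  next
    case False
    then obtain x where x: "x \<in> A3" by auto
    have "A3 = {x}"
    proof
      show "A3 \<subseteq> {x}"
      proof
        fix y assume y: "y \<in> A3"
        have "y = x"
          by (rule same_res_close) (use x y e_def dm in \<open>auto simp: A3_def A_def\<close>)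
        then show "y \<in> {x}" by simp
      qed
    qed (use x in auto)
    then show ?thesis using bound by simp
  qed
  show ?thesis using sumA s12 s3 unfolding A_def[symmetric] B_def[symmetric] by linarith
qed
lemma cb_odd: "Suc n * ((2*n+1) choose n) = (2*n+1) * ((2*n) choose n)"
proof -
  have "(2*n+1) * ((2*n) choose n) = ((2*n+1) choose (n+1)) * Suc n"
    using Suc_times_binomial_eq[of "2*n" n] by simp
  moreover have "(2*n+1) choose (n+1) = (2*n+1) choose n"
    using binomial_symmetric[of n "2*n+1"] by simp
  ultimately show ?thesis by simp
qed
lemma cb_rec: "Suc n * ((2*Suc n) choose Suc n) = 2*(2*n+1) * ((2*n) choose n)"
proof -
  have "Suc n * ((2*Suc n) choose Suc n) = (2*n+2) * ((2*n+1) choose n)"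
    using Suc_times_binomial[of n "2*n+1"] by simp
  also have "\<dots> = 2 * (Suc n * ((2*n+1) choose n))" by simp
  also have "\<dots> = 2*(2*n+1) * ((2*n) choose n)" by (simp only: cb_odd)
  finally show ?thesis .
qed
lemma cb_step: "(m choose k) = c \<Longrightarrow> m = 2*k \<Longrightarrow> m' = m+2 \<Longrightarrow> k' = k+1 \<Longrightarrow> (m' choose k') = 2*(2*k+1)*c div k'"
proof -
  assume a: "(m choose k) = c" "m = 2*k" "m' = m+2" "k' = k+1"
  have "k' * (m' choose k') = 2*(2*k+1)*c" using cb_rec[of k] a by simp
  then show ?thesis using a by (metis nonzero_mult_div_cancel_left add_is_0 one_neq_zero)
qed
lemma cb_small: "\<forall>n\<le>10. ((2*n) choose n)^2 * (125*n+32) \<le> 40 * (16::nat)^n"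
proof -
  have c1: "(2 choose 1) = (2::nat)" by simp
  have c2: "(4 choose 2) = (6::nat)"
  proof - have "(4::nat) choose 2 = 2*(2*1+1)*2 div 2" by (rule cb_step[OF c1]) simp_all
    also have "\<dots> = 6" by simp
    finally show ?thesis . qed
  have c3: "(6 choose 3) = (20::nat)"
  proof - have "(6::nat) choose 3 = 2*(2*2+1)*6 div 3" by (rule cb_step[OF c2]) simp_all
    also have "\<dots> = 20" by simp
    finally show ?thesis . qed
  have c4: "(8 choose 4) = (70::nat)"
  proof - have "(8::nat) choose 4 = 2*(2*3+1)*20 div 4" by (rule cb_step[OF c3]) simp_all
    also have "\<dots> = 70" by simp
    finally show ?thesis . qed
  have c5: "(10 choose 5) = (252::nat)"
  proof - have "(10::nat) choose 5 = 2*(2*4+1)*70 div 5" by (rule cb_step[OF c4]) simp_all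
    also have "\<dots> = 252" by simp
    finally show ?thesis . qed
  have c6: "(12 choose 6) = (924::nat)"
  proof - have "(12::nat) choose 6 = 2*(2*5+1)*252 div 6" by (rule cb_step[OF c5]) simp_all
    also have "\<dots> = 924" by simp
    finally show ?thesis . qed
  have c7: "(14 choose 7) = (3432::nat)"
  proof - have "(14::nat) choose 7 = 2*(2*6+1)*924 div 7" by (rule cb_step[OF c6]) simp_all
    also have "\<dots> = 3432" by simp
    finally show ?thesis . qed
  have c8: "(16 choose 8) = (12870::nat)"
  proof - have "(16::nat) choose 8 = 2*(2*7+1)*3432 div 8" by (rule cb_step[OF c7]) simp_all
    also have "\<dots> = 12870" by simp
    finally show ?thesis . qed
  have c9: "(18 choose 9) = (48620::nat)"
  proof - have "(18::nat) choose 9 = 2*(2*8+1)*12870 div 9" by (rule cb_step[OF c8]) simp_all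
    also have "\<dots> = 48620" by simp
    finally show ?thesis . qed
  have c10: "(20 choose 10) = (184756::nat)"
  proof - have "(20::nat) choose 10 = 2*(2*9+1)*48620 div 10" by (rule cb_step[OF c9]) simp_all
    also have "\<dots> = 184756" by simp
    finally show ?thesis . qed
  have e: "{..10::nat} = {0,1,2,3,4,5,6,7,8,9,10}" by (auto; arith)
  show ?thesis unfolding Ball_def[symmetric] atMost_iff[symmetric] e
    by (simp add: c1 c2 c3 c4 c5 c6 c7 c8 c9 c10)
qed
lemma cb_all: "((2*n) choose n)^2 * (125*n+32) \<le> 40 * (16::nat)^n"
proof (induction n rule: nat_less_induct)
  case (1 n)
  show ?case
  proof (cases "n \<le> 10")
    case True then show ?thesis using cb_small by blast
  next
    case False
    then obtain k where n: "n = Suc k" and k: "10 \<le> k" by (metis Suc_pred' le_less_Suc_eq less_Suc_eq_0_disj not_le_imp_less le_refl nat_le_linear)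
    define C where "C = (2*k) choose k"
    define D where "D = (2*Suc k) choose Suc k"
    have IH: "C^2 * (125*k+32) \<le> 40 * 16^k" using 1 n C_def by simp
    have rec: "Suc k * D = 2*(2*k+1) * C" using cb_rec[of k] C_def D_def by simp
    have poly: "(2*k+1)^2 * (125*k+157) \<le> 4*(k+1)^2*(125*k+32)"
    proof -
      have "(2*k+1)^2 * (125*k+157) = 500*k^3+1128*k^2+753*k+157"
        by (simp add: power2_eq_square power3_eq_cube algebra_simps)
      also have "\<dots> \<le> 500*k^3+1128*k^2+756*k+128" using k by simp
      also have "\<dots> = 4*(k+1)^2*(125*k+32)"
        by (simp add: power2_eq_square power3_eq_cube algebra_simps)
      finally show ?thesis .
    qed
    have "(Suc k)^2 * (D^2 * (125*Suc k+32)) = (Suc k * D)^2 * (125*k+157)"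
      by (simp add: power2_eq_square algebra_simps)
    also have "\<dots> = 4 * ((2*k+1)^2 * (125*k+157)) * C^2" unfolding rec
      by (simp add: power2_eq_square algebra_simps)
    also have "\<dots> \<le> 4 * (4*(k+1)^2*(125*k+32)) * C^2"
      using poly by (intro mult_right_mono mult_left_mono) auto
    also have "\<dots> = 16*(k+1)^2 * (C^2*(125*k+32))" by simp
    also have "\<dots> \<le> 16*(k+1)^2 * (40 * 16^k)" using IH by (intro mult_left_mono) auto
    also have "\<dots> = (Suc k)^2 * (40 * 16^Suc k)" by simp
    finally have "D^2 * (125*Suc k+32) \<le> 40 * 16^Suc k"
      by (metis mult_le_cancel1 zero_less_power zero_less_Suc)
    then show ?thesis using n D_def by simp
  qed
qed

lemma mid_bound: "25 * s * (s choose (s div 2))^2 \<le> 16 * (4::nat)^s"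
proof (cases "even s")
  case True
  then obtain n where s: "s = 2*n" by blast
  have "125 * n * ((2*n) choose n)^2 \<le> 40 * 16^n" using cb_all[of n]
    by (metis (no_types, lifting) add_leD1 mult.commute mult.left_commute distrib_left le_trans le_add1 mult_le_mono2)
  moreover have "(4::nat)^s = 16^n" using s by (simp add: power_mult)
  ultimately show ?thesis using s by simp
next
  case False
  then obtain n where s: "s = 2*n+1" by (metis oddE)
  have sd: "s div 2 = n" using s by simp
  define C where "C = (2*n) choose n"
  define M where "M = (2*n+1) choose n"
  have rec: "Suc n * M = (2*n+1) * C" using cb_odd[of n] C_def M_def by simp
  have IH: "C^2 * (125*n+32) \<le> 40 * 16^n" using cb_all[of n] C_def by simp
  have poly: "1000 * (2*n+1)^3 \<le> 64*(n+1)^2*(125*n+32)"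
  proof -
    have "1000 * (2*n+1)^3 = 8000*n^3+12000*n^2+6000*n+1000"
      by (simp add: power2_eq_square power3_eq_cube algebra_simps)
    also have "\<dots> \<le> 8000*n^3+18048*n^2+12096*n+2048" by simp
    also have "\<dots> = 64*(n+1)^2*(125*n+32)"
      by (simp add: power2_eq_square power3_eq_cube algebra_simps)
    finally show ?thesis .
  qed
  have "(Suc n)^2 * (25 * s * M^2 * (125*n+32)) = 25 * (2*n+1) * (Suc n * M)^2 * (125*n+32)"
    using s by (simp add: power2_eq_square algebra_simps)
  also have "\<dots> = 25 * (2*n+1)^3 * (C^2 * (125*n+32))" unfolding rec
    by (simp add: power2_eq_square power3_eq_cube algebra_simps)
  also have "\<dots> \<le> 25 * (2*n+1)^3 * (40 * 16^n)" using IH by (intro mult_left_mono) auto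
  also have "\<dots> = (1000 * (2*n+1)^3) * 16^n" by simp
  also have "\<dots> \<le> (64*(n+1)^2*(125*n+32)) * 16^n" using poly by (intro mult_right_mono) auto
  also have "\<dots> = (Suc n)^2 * (16 * 4^s * (125*n+32))" using s by (simp add: power_mult power_add)
  finally have "25 * s * M^2 * (125*n+32) \<le> 16 * 4^s * (125*n+32)"
    by (metis mult_le_cancel1 zero_less_power zero_less_Suc)
  then have "25 * s * M^2 \<le> 16 * 4^s" by simp
  then show ?thesis using sd M_def s by simp
qed
lemma final_ineq:
  fixes Nj Nj' M m s T :: nat
  assumes h1: "Nj \<le> Nj' + M" and h2: "2^s \<le> m*(Nj'+M)" and h3: "m \<le> T" and h4: "T^2 \<le> s"
    and h5: "25*s*M^2 \<le> 16*4^s" and h6: "0 < m"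
  shows "real Nj \<le> (1 + 4*real m / sqrt (real s)) * real Nj'"
proof -
  have spos: "0 < s" using h3 h4 h6 by (metis le_trans less_le_trans power2_nat_le_imp_le zero_less_iff_neq_zero le_zero_eq not_gr_zero)
  define r where "r = sqrt (real s)"
  have rpos: "0 < r" using spos r_def by simp
  have r2: "r^2 = real s" using r_def by simp
  have mr: "real m \<le> r"
  proof -
    have "real m ^2 \<le> real s" using h3 h4 by (metis of_nat_le_iff of_nat_power le_trans power_mono zero_le)
    then show ?thesis unfolding r_def using real_le_rsqrt by blast
  qed
  have "(5 * real M * r)^2 \<le> (4 * 2^s)^2"
  proof -
    have "(5 * real M * r)^2 = real (25*s*M^2)" using r2 by (simp add: power_mult_distrib)
    also have "\<dots> \<le> real (16*4^s)" using h5 by linarith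
    also have "\<dots> = (4 * 2^s)^2"
    proof -
      have "(4::real)^s = (2^s)^2" using power_mult_distrib[of "2::real" 2 s] by (simp add: power2_eq_square)
      then show ?thesis by (simp add: power_mult_distrib)
    qed
    finally show ?thesis .
  qed
  then have k1: "5 * real M * r \<le> 4 * 2^s" by (rule power2_le_imp_le) simp
  have k2: "real M * r + 4 * real m * real M \<le> 5 * real M * r"
  proof -
    have "real M * real m \<le> real M * r" using mr by (intro mult_left_mono) auto
    then show ?thesis by (simp add: algebra_simps)
  qed
  have k3: "4 * (2::real)^s \<le> 4 * real m * (real Nj' + real M)"
    using h2 by (metis of_nat_le_iff of_nat_mult of_nat_add of_nat_numeral of_nat_power mult_left_mono mult.assoc zero_le_numeral)
  have "real M * r \<le> 4 * real m * real Nj'" using k1 k2 k3 by (simp add: algebra_simps)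
  then have "real M \<le> 4 * real m / r * real Nj'" using rpos by (simp add: field_simps)
  then show ?thesis using h1 r_def by (simp add: algebra_simps)
qed
theorem lemma6:
  fixes T b s :: nat
  assumes "b < T" and "b \<noteq> 0" and "s \<ge> T ^ 2"
  shows "bias_at_most T (iter_sumset T {#0, b#} s) (gen_subgroup T b)
           (4 * real (card (gen_subgroup T b)) / sqrt (real s))"
proof -
  have Tpos: "0 < T" using assms by simp
  define m where "m = T div gcd b T"
  define g where "g = (\<lambda>k::nat. (k*b) mod T)"
  have gm: "g k = g k' \<longleftrightarrow> k mod m = k' mod m" for k k'
    unfolding g_def m_def using gmod[OF Tpos] by simp
  have mpos: "0 < m" unfolding m_def using Tpos
    by (simp add: div_greater_zero_iff gcd_le2_nat)
  have mT: "m \<le> T" unfolding m_def by simp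
  have H: "gen_subgroup T b = g ` {..<m}"
  proof -
    have "gen_subgroup T b = range g" unfolding gen_subgroup_def g_def by auto
    also have "\<dots> = g ` {..<m}"
    proof
      show "range g \<subseteq> g ` {..<m}"
      proof
        fix x assume "x \<in> range g"
        then obtain k where "x = g k" by auto
        moreover have "g k = g (k mod m)" using gm by simp
        moreover have "k mod m < m" using mpos by simp
        ultimately show "x \<in> g ` {..<m}" by auto
      qed
    qed auto
    finally show ?thesis .
  qed
  have cardH: "card (gen_subgroup T b) = m"
  proof -
    have "inj_on g {..<m}" unfolding inj_on_def using gm by simp
    then show ?thesis unfolding H by (simp add: card_image)
  qed
  define N where "N = (\<lambda>j. \<Sum>k\<in>{k. k \<le> s \<and> k mod m = j}. s choose k)"
  define M where "M = s choose (s div 2)"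
  have cnt: "count (iter_sumset T {#0, b#} s) (g k0) = N (k0 mod m)" for k0
  proof -
    have "{k. k \<le> s \<and> (k*b) mod T = g k0} = {k. k \<le> s \<and> k mod m = k0 mod m}"
      using gm unfolding g_def by auto
    then show ?thesis unfolding count_iter N_def by simp
  qed
  have cmpN: "N j \<le> N j' + M" if "j < m" "j' < m" for j j'
    unfolding N_def M_def
  proof (rule unimodal_class[OF mpos that, of "s div 2" s])
    show "s div 2 \<le> s" by simp
    show "s choose i \<le> s choose k" if "i \<le> k" "k \<le> s div 2" for i k
      using that by (intro binomial_mono) auto
    show "s choose k \<le> s choose i" if "s div 2 \<le> i" "i \<le> k" for i k
    proof (cases "k \<le> s")
      case True then show ?thesis using that by (intro binomial_antimono) auto
    next
      case False then show ?thesis by (simp add: binomial_eq_0)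
    qed
    show "s choose k \<le> s choose (s div 2)" for k by (rule binomial_maximum)
  qed
  have total: "(\<Sum>j<m. N j) = 2^s"
  proof -
    have "(\<Sum>j<m. N j) = (\<Sum>j\<in>{..<m}. \<Sum>k\<in>{k. k \<in> {..s} \<and> k mod m = j}. s choose k)"
      unfolding N_def by simp
    also have "\<dots> = (\<Sum>k\<le>s. s choose k)"
      by (rule sum.group) (use mpos in auto)
    also have "\<dots> = 2^s" by (rule choose_row_sum)
    finally show ?thesis .
  qed
  have lowN: "2^s \<le> m * (N j' + M)" if "j' < m" for j'
  proof -
    have "(\<Sum>j<m. N j) \<le> (\<Sum>j<m. N j' + M)" by (rule sum_mono) (use cmpN that in auto)
    then show ?thesis using total by simp
  qed
  have mb: "25*s*M^2 \<le> 16*4^s" unfolding M_def by (rule mid_bound)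
  show ?thesis unfolding bias_at_most_def cardH
  proof (intro ballI)
    fix a h assume a: "a \<in># iter_sumset T {#0, b#} s" and h: "h \<in> gen_subgroup T b"
    have "0 < count (iter_sumset T {#0, b#} s) a" using a by simp
    then have "{k. k \<le> s \<and> g k = a} \<noteq> {}" unfolding count_iter g_def by (metis sum.empty less_irrefl)
    then obtain k0 where "g k0 = a" by blast
    then have ak: "a = g k0" by simp
    obtain k1 where hk: "h = g k1" using h H by auto
    have ah: "(a + h) mod T = g (k0 + k1)" unfolding ak hk g_def
      by (simp add: mod_add_eq distrib_right)
    show "real (count (iter_sumset T {#0, b#} s) a)
          \<le> (1 + 4 * real m / sqrt (real s)) * real (count (iter_sumset T {#0, b#} s) ((a + h) mod T))"
    proof -
      have j1: "k0 mod m < m" "(k0 + k1) mod m < m" using mpos by auto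
      show ?thesis unfolding ah unfolding ak cnt
        by (rule final_ineq[OF cmpN[OF j1] lowN[OF j1(2)] mT assms(3) mb mpos])
    qed
  qed
qed

end
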